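(* Let $A\in\mathbb{R}_{\max}^{n\times n}$ with $\lambda(A)=0$, let $g=g(\mathrm{crit}(A))$, assume $T_1(A)=\mathrm{DM}(g,n)$ and that $\mathrm{crit}(A)$ contains, up to choice of first node, a unique cycle $Z_0$ of length $g$. Let $i$ be a node of $Z_0$ and $j$ a node not in $Z_0$. Then in any interesting walk there is exactly one occurrence of $i$ between any two consecutive occurrences of $j$, and there is no occurrence of $i$ before the first occurrence of $j$ nor after the last occurrence of $j$.
   Context: Max-plus semiring $\mathbb{R}_{\max}=\mathbb{R}\cup\{-\infty\}$ with $a\oplus b=\max(a,b)$, $a\otimes b=a+b$; $(AB)_{ij}=\max_k(a_{ik}+b_{kj})$; $A^t$ is the $t$-th max-plus power, $A^0=I$. $\mathcal{D}(A)$ is the digraph on $\{1,\dots,n\}$ with arc $(i,j)$ of weight $a_{ij}$ whenever $a_{ij}\ne-\infty$. A walk is a node sequence whose consecutive pairs are arcs, its length is its number of arcs and its weight the sum of its arc weights; cycles are closed walks with no proper closed subwalk. $\lambda(A)$ is the maximal cycle mean. $\mathrm{crit}(A)$ is the subgraph of all nodes and arcs of cycles attaining $\lambda(A)$; its nodes are critical. $g(\mathrm{crit}(A))$ is the maximum over strongly connected components of $\mathrm{crit}(A)$ of their minimal cycle length. The cyclicity of $\mathrm{crit}(A)$ is the lcm over components of the gcd of their cycle lengths. CSR terms: with $\gamma$ the cyclicity of $\mathrm{crit}(A)$ and $\lambda(A)=0$, $M=I\oplus N\oplus\dots\oplus N^{n-1}$ where $N=A^\gamma$: $c_{ij}=m_{ij}$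 if $j$ critical, else $-\infty$; $r_{ij}=m_{ij}$ if $i$ critical, else $-\infty$; $s_{ij}=a_{ij}$ if $(i,j)$ is an arc of $\mathrm{crit}(A)$, else $-\infty$; $CS^tR[A]$ is the product $CS^tR$. $B_N$ has $(B_N)_{ij}=-\infty$ if $i$ or $j$ is critical and $a_{ij}$ otherwise. $T_1(A)$ is the least $T\ge0$ with $A^t=CS^tR[A]\oplus B_N^t$ for all $t\ge T$. $\mathrm{DM}(g,n)=g(n-2)+n$. Twice optimal / interesting walks: a walk $W$ from $i$ to $j$ passing through at least one node of $Z_0$ is twice optimal if it has maximal weight among all walks from $i$ to $j$ passing through a node of $Z_0$ whose length is congruent to the length of $W$ modulo $g$, and has minimal length among all such walks of maximal weight. It is interesting if it is twice optimal and has length $\mathrm{DM}(g,n)+g-1$. *)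

theory Defs
  imports "HOL-Library.Extended_Real"
begin

text \<open>Max-plus matrices of size n: functions nat => nat => ereal, relevant on
indices {0..<n}; entries are in R_max = R union {-infinity} (never +infinity).
Nodes of the digraph D(A) are 0..n-1.\<close>

type_synonym mpmat = "nat \<Rightarrow> nat \<Rightarrow> ereal"

definition mp_mult :: "nat \<Rightarrow> mpmat \<Rightarrow> mpmat \<Rightarrow> mpmat" where
  "mp_mult n A B = (\<lambda>i j. SUP k\<in>{..<n}. A i k + B k j)"

definition mp_id :: mpmat where
  "mp_id = (\<lambda>i j. if i = j then 0 else -\<infinity>)"

fun mp_pow :: "nat \<Rightarrow> mpmat \<Rightarrow> nat \<Rightarrow> mpmat" where
  "mp_pow n A 0 = mp_id"
| "mp_pow n A (Suc t) = mp_mult n A (mp_pow n A t)"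

definition mp_plus :: "mpmat \<Rightarrow> mpmat \<Rightarrow> mpmat" where
  "mp_plus A B = (\<lambda>i j. max (A i j) (B i j))"

definition is_arc :: "nat \<Rightarrow> mpmat \<Rightarrow> nat \<Rightarrow> nat \<Rightarrow> bool" where
  "is_arc n A i j \<longleftrightarrow> i < n \<and> j < n \<and> A i j \<noteq> -\<infinity>"

definition is_walk :: "nat \<Rightarrow> mpmat \<Rightarrow> nat list \<Rightarrow> bool" where
  "is_walk n A W \<longleftrightarrow> W \<noteq> [] \<and> (\<forall>k\<in>set W. k < n) \<and>
     (\<forall>k. Suc k < length W \<longrightarrow> is_arc n A (W ! k) (W ! Suc k))"

definition wlen :: "nat list \<Rightarrow> nat" where
  "wlen W = length W - 1"

definition wweight :: "mpmat \<Rightarrow> nat list \<Rightarrow> ereal" where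
  "wweight A W = (\<Sum>k<wlen W. A (W ! k) (W ! Suc k))"

definition is_cycle :: "nat \<Rightarrow> mpmat \<Rightarrow> nat list \<Rightarrow> bool" where
  "is_cycle n A Z \<longleftrightarrow> is_walk n A Z \<and> length Z \<ge> 2 \<and> hd Z = last Z \<and> distinct (tl Z)"

definition mcm :: "nat \<Rightarrow> mpmat \<Rightarrow> ereal" where
  "mcm n A = (SUP Z\<in>{Z. is_cycle n A Z}. wweight A Z / ereal (real (wlen Z)))"

definition is_crit_cycle_of_A :: "nat \<Rightarrow> mpmat \<Rightarrow> nat list \<Rightarrow> bool" where
  "is_crit_cycle_of_A n A Z \<longleftrightarrow> is_cycle n A Z \<and> wweight A Z / ereal (real (wlen Z)) = mcm n A"

definition crit_arc :: "nat \<Rightarrow> mpmat \<Rightarrow> nat \<Rightarrow> nat \<Rightarrow> bool" where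
  "crit_arc n A i j \<longleftrightarrow> (\<exists>Z. is_crit_cycle_of_A n A Z \<and>
      (\<exists>k. Suc k < length Z \<and> Z ! k = i \<and> Z ! Suc k = j))"

definition crit_node :: "nat \<Rightarrow> mpmat \<Rightarrow> nat \<Rightarrow> bool" where
  "crit_node n A i \<longleftrightarrow> (\<exists>Z. is_crit_cycle_of_A n A Z \<and> i \<in> set Z)"

definition crit_cycle :: "nat \<Rightarrow> mpmat \<Rightarrow> nat list \<Rightarrow> bool" where
  "crit_cycle n A Z \<longleftrightarrow> is_cycle n A Z \<and>
      (\<forall>k. Suc k < length Z \<longrightarrow> crit_arc n A (Z ! k) (Z ! Suc k))"

definition crit_reach :: "nat \<Rightarrow> mpmat \<Rightarrow> nat \<Rightarrow> nat \<Rightarrow> bool" where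
  "crit_reach n A = (\<lambda>i j. (i, j) \<in> {(a, b). crit_arc n A a b}\<^sup>*)"

definition crit_comp :: "nat \<Rightarrow> mpmat \<Rightarrow> nat \<Rightarrow> nat set" where
  "crit_comp n A k = {l. crit_reach n A k l \<and> crit_reach n A l k}"

definition crit_girth :: "nat \<Rightarrow> mpmat \<Rightarrow> nat" where
  "crit_girth n A = Max {Min {wlen Z | Z. crit_cycle n A Z \<and> set Z \<subseteq> crit_comp n A k} | k. crit_node n A k}"

definition crit_cyclicity :: "nat \<Rightarrow> mpmat \<Rightarrow> nat" where
  "crit_cyclicity n A = Lcm {Gcd {wlen Z | Z. crit_cycle n A Z \<and> set Z \<subseteq> crit_comp n A k} | k. crit_node n A k}"

definition csr_N :: "nat \<Rightarrow> mpmat \<Rightarrow> mpmat" where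
  "csr_N n A = mp_pow n A (crit_cyclicity n A)"

definition csr_M :: "nat \<Rightarrow> mpmat \<Rightarrow> mpmat" where
  "csr_M n A = (\<lambda>i j. SUP t\<in>{..<n}. mp_pow n (csr_N n A) t i j)"

definition csr_C :: "nat \<Rightarrow> mpmat \<Rightarrow> mpmat" where
  "csr_C n A = (\<lambda>i j. if crit_node n A j then csr_M n A i j else -\<infinity>)"

definition csr_R :: "nat \<Rightarrow> mpmat \<Rightarrow> mpmat" where
  "csr_R n A = (\<lambda>i j. if crit_node n A i then csr_M n A i j else -\<infinity>)"

definition csr_S :: "nat \<Rightarrow> mpmat \<Rightarrow> mpmat" where
  "csr_S n A = (\<lambda>i j. if crit_arc n A i j then A i j else -\<infinity>)"

definition CSR :: "nat \<Rightarrow> mpmat \<Rightarrow> nat \<Rightarrow> mpmat" where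
  "CSR n A t = mp_mult n (mp_mult n (csr_C n A) (mp_pow n (csr_S n A) t)) (csr_R n A)"

definition B_N :: "nat \<Rightarrow> mpmat \<Rightarrow> mpmat" where
  "B_N n A = (\<lambda>i j. if crit_node n A i \<or> crit_node n A j then -\<infinity> else A i j)"

definition csr_holds_from :: "nat \<Rightarrow> mpmat \<Rightarrow> nat \<Rightarrow> bool" where
  "csr_holds_from n A T \<longleftrightarrow> (\<forall>t\<ge>T. \<forall>i<n. \<forall>j<n.
      mp_pow n A t i j = mp_plus (CSR n A t) (mp_pow n (B_N n A) t) i j)"

definition T1 :: "nat \<Rightarrow> mpmat \<Rightarrow> nat" where
  "T1 n A = (LEAST T. csr_holds_from n A T)"

definition DM :: "nat \<Rightarrow> nat \<Rightarrow> nat" where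
  "DM g n = g * (n - 2) + n"

definition through :: "nat list \<Rightarrow> nat list \<Rightarrow> bool" where
  "through Z0 W \<longleftrightarrow> set W \<inter> set Z0 \<noteq> {}"

definition twice_optimal :: "nat \<Rightarrow> mpmat \<Rightarrow> nat \<Rightarrow> nat list \<Rightarrow> nat list \<Rightarrow> bool" where
  "twice_optimal n A g Z0 W \<longleftrightarrow> is_walk n A W \<and> through Z0 W \<and>
     (\<forall>V. is_walk n A V \<and> hd V = hd W \<and> last V = last W \<and> through Z0 V \<and>
          wlen V mod g = wlen W mod g \<longrightarrow>
          wweight A V \<le> wweight A W \<and>
          (wweight A V = wweight A W \<longrightarrow> wlen W \<le> wlen V))"

definition interesting :: "nat \<Rightarrow> mpmat \<Rightarrow> nat \<Rightarrow> nat list \<Rightarrow> nat list \<Rightarrow> bool" where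
  "interesting n A g Z0 W \<longleftrightarrow> twice_optimal n A g Z0 W \<and> wlen W = DM g n + g - 1"

end

theory Submission
  imports Defs
begin


definition wcut :: "nat list \<Rightarrow> nat \<Rightarrow> nat \<Rightarrow> nat list" where
  "wcut W p q = take (Suc p) W @ drop (Suc q) W"
definition sub :: "nat list \<Rightarrow> nat \<Rightarrow> nat \<Rightarrow> nat list" where
  "sub W p q = take (Suc (q - p)) (drop p W)"

lemma length_cut: "p \<le> q \<Longrightarrow> q < length W \<Longrightarrow> length (wcut W p q) + (q - p) = length W"
  unfolding wcut_def by auto

lemma cut_nth1: "p \<le> q \<Longrightarrow> q < length W \<Longrightarrow> k \<le> p \<Longrightarrow> wcut W p q ! k = W ! k"
  unfolding wcut_def by (auto simp: nth_append)

lemma cut_nth2: "p \<le> q \<Longrightarrow> q < length W \<Longrightarrow> p < k \<Longrightarrow> k < length (wcut W p q) \<Longrightarrow>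
   wcut W p q ! k = W ! (k + (q - p))"
proof -
  assume a: "p \<le> q" "q < length W" "p < k" "k < length (wcut W p q)"
  then have "Suc (q + k - Suc p) = k + (q - p)" by arith
  with a show ?thesis unfolding wcut_def by (auto simp: nth_append)
qed

lemma cut_nth3: "p \<le> q \<Longrightarrow> q < length W \<Longrightarrow> W ! p = W ! q \<Longrightarrow> p \<le> k \<Longrightarrow> k < length (wcut W p q) \<Longrightarrow>
   wcut W p q ! k = W ! (k + (q - p))"
proof -
  assume a: "p \<le> q" "q < length W" "W ! p = W ! q" "p \<le> k" "k < length (wcut W p q)"
  show ?thesis
  proof (cases "k = p")
    case True
    then have "wcut W p q ! k = W ! p" using cut_nth1[OF a(1,2)] by simp
    moreover have "k + (q - p) = q" using True a by simp
    ultimately show ?thesis using a by simp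
  next
    case False
    then have "p < k" using a by simp
    then show ?thesis using cut_nth2[OF a(1,2) _ a(5)] by simp
  qed
qed

lemma length_sub: "p \<le> q \<Longrightarrow> q < length W \<Longrightarrow> length (sub W p q) = Suc (q - p)"
  unfolding sub_def by auto

lemma sub_nth: "p \<le> q \<Longrightarrow> q < length W \<Longrightarrow> k \<le> q - p \<Longrightarrow> sub W p q ! k = W ! (p + k)"
  unfolding sub_def by auto

lemma sum_split_aux:
  fixes f :: "nat \<Rightarrow> 'a::comm_monoid_add"
  assumes "p + d \<le> L"
  shows "(\<Sum>k<L. f k) = (\<Sum>k<L - d. if k < p then f k else f (k + d)) + (\<Sum>k<d. f (p + k))"
proof -
  have c1: "(\<Sum>k\<in>{0..<p}. f k) + (\<Sum>k\<in>{p..<L}. f k) = (\<Sum>k\<in>{0..<L}. f k)"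
    by (rule sum.atLeastLessThan_concat) (use assms in auto)
  have c2: "(\<Sum>k\<in>{p..<p+d}. f k) + (\<Sum>k\<in>{p+d..<L}. f k) = (\<Sum>k\<in>{p..<L}. f k)"
    by (rule sum.atLeastLessThan_concat) (use assms in auto)
  have e1: "(\<Sum>k<L. f k) = (\<Sum>k<p. f k) + (\<Sum>k\<in>{p..<p+d}. f k) + (\<Sum>k\<in>{p+d..<L}. f k)"
    using c1 c2 by (simp add: atLeast0LessThan add.assoc)
  define h where "h k = (if k < p then f k else f (k + d))" for k
  have c3: "(\<Sum>k\<in>{0..<p}. h k) + (\<Sum>k\<in>{p..<L-d}. h k) = (\<Sum>k\<in>{0..<L-d}. h k)"
    by (rule sum.atLeastLessThan_concat) (use assms in auto)
  have c4: "(\<Sum>k\<in>{0..<p}. h k) = (\<Sum>k\<in>{0..<p}. f k)"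
    by (rule sum.cong) (auto simp: h_def)
  have c5: "(\<Sum>k\<in>{p..<L-d}. h k) = (\<Sum>k\<in>{p..<L-d}. f (k + d))"
    by (rule sum.cong) (auto simp: h_def)
  have e2: "(\<Sum>k<L - d. h k) = (\<Sum>k<p. f k) + (\<Sum>k\<in>{p..<L-d}. f (k + d))"
    using c3 c4 c5 by (simp add: atLeast0LessThan)
  have e3: "(\<Sum>k\<in>{p..<L-d}. f (k + d)) = (\<Sum>k\<in>{p+d..<L}. f k)"
  proof -
    have "(\<Sum>k\<in>{p+d..<(L-d)+d}. f k) = (\<Sum>k\<in>{p..<L-d}. f (k + d))"
      by (rule sum.shift_bounds_nat_ivl)
    moreover have "(L - d) + d = L" using assms by simp
    ultimately show ?thesis by simp
  qed
  have e4: "(\<Sum>k\<in>{p..<p+d}. f k) = (\<Sum>k<d. f (p + k))"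
  proof -
    have "(\<Sum>k\<in>{0+p..<d+p}. f k) = (\<Sum>k\<in>{0..<d}. f (k + p))"
      by (rule sum.shift_bounds_nat_ivl)
    then show ?thesis by (simp add: atLeast0LessThan add.commute)
  qed
  show ?thesis using e1 e2 e3 e4 unfolding h_def by (simp add: ac_simps)
qed

lemma walk_cut:
  assumes w: "is_walk n A W" and pq: "p \<le> q" "q < length W" "W ! p = W ! q"
  shows "is_walk n A (wcut W p q)"
proof -
  have len: "length (wcut W p q) + (q - p) = length W" using length_cut pq by blast
  have ne: "wcut W p q \<noteq> []" using pq unfolding wcut_def by auto
  have st: "set (wcut W p q) \<subseteq> set W" unfolding wcut_def
    using set_take_subset set_drop_subset by fastforce
  have arcs: "is_arc n A (wcut W p q ! k) (wcut W p q ! Suc k)" if k: "Suc k < length (wcut W p q)" for k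
  proof (cases "Suc k \<le> p")
    case True
    then have "wcut W p q ! k = W ! k" "wcut W p q ! Suc k = W ! Suc k"
      using cut_nth1 pq by auto
    moreover have "Suc k < length W" using True pq by auto
    ultimately show ?thesis using w unfolding is_walk_def by auto
  next
    case False
    then have "wcut W p q ! k = W ! (k + (q-p))" "wcut W p q ! Suc k = W ! (Suc k + (q-p))"
      using cut_nth3[OF pq] k by auto
    moreover have "Suc (k + (q-p)) < length W" using k len by auto
    ultimately show ?thesis using w unfolding is_walk_def by auto
  qed
  show ?thesis using ne st arcs w unfolding is_walk_def by blast
qed

lemma walk_sub:
  assumes w: "is_walk n A W" and pq: "p \<le> q" "q < length W"
  shows "is_walk n A (sub W p q)"
proof -
  have ne: "sub W p q \<noteq> []" using pq length_sub by force
  have st: "set (sub W p q) \<subseteq> set W" unfolding sub_def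
    by (meson order_trans set_drop_subset set_take_subset)
  have arcs: "is_arc n A (sub W p q ! k) (sub W p q ! Suc k)" if k: "Suc k < length (sub W p q)" for k
  proof -
    have "sub W p q ! k = W ! (p + k)" "sub W p q ! Suc k = W ! Suc (p + k)"
      using sub_nth[OF pq] k length_sub[OF pq] by auto
    moreover have "Suc (p + k) < length W" using k length_sub[OF pq] pq by auto
    ultimately show ?thesis using w unfolding is_walk_def by auto
  qed
  show ?thesis using ne st arcs w unfolding is_walk_def by blast
qed

lemma hd_cut: "p \<le> q \<Longrightarrow> q < length W \<Longrightarrow> hd (wcut W p q) = hd W"
  unfolding wcut_def by (cases W) auto

lemma last_cut: "p \<le> q \<Longrightarrow> q < length W \<Longrightarrow> W ! p = W ! q \<Longrightarrow> last (wcut W p q) = last W"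
proof -
  assume a: "p \<le> q" "q < length W" "W ! p = W ! q"
  show ?thesis
  proof (cases "Suc q < length W")
    case True then show ?thesis unfolding wcut_def by (simp add: last_append)
  next
    case False
    then have q: "q = length W - 1" using a by auto
    have ne: "W \<noteq> []" using a by auto
    have l1: "last W = W ! q" using q ne by (simp add: last_conv_nth)
    have l2: "last (take (Suc p) W) = W ! p" using a
      by (simp add: take_Suc_conv_app_nth)
    have "drop (Suc q) W = []" using False by simp
    then show ?thesis using l1 l2 a unfolding wcut_def by simp
  qed
qed

lemma hd_sub: "p \<le> q \<Longrightarrow> q < length W \<Longrightarrow> hd (sub W p q) = W ! p"
proof -
  assume a: "p \<le> q" "q < length W"
  then have "sub W p q \<noteq> []" using length_sub[of p q W] by auto
  then show ?thesis using sub_nth[of p q W 0] a by (simp add: hd_conv_nth)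
qed

lemma last_sub: "p \<le> q \<Longrightarrow> q < length W \<Longrightarrow> last (sub W p q) = W ! q"
proof -
  assume a: "p \<le> q" "q < length W"
  then have "sub W p q \<noteq> []" using length_sub[of p q W] by auto
  then show ?thesis using sub_nth[of p q W "q-p"] length_sub[of p q W] a by (simp add: last_conv_nth)
qed

lemma weight_cut:
  assumes pq: "p \<le> q" "q < length W" "W ! p = W ! q"
  shows "wweight A W = wweight A (wcut W p q) + wweight A (sub W p q)"
proof -
  define f where "f k = A (W ! k) (W ! Suc k)" for k
  define L where "L = length W - 1"
  have len: "length (wcut W p q) + (q - p) = length W" using length_cut pq by blast
  have wl: "wlen (wcut W p q) = L - (q - p)" unfolding wlen_def L_def using len by auto
  have ws: "wlen (sub W p q) = q - p" unfolding wlen_def using length_sub[OF pq(1,2)] by simp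
  have pdL: "p + (q - p) \<le> L" using pq unfolding L_def by auto
  have "wweight A W = (\<Sum>k<L. f k)" unfolding wweight_def wlen_def L_def f_def by simp
  also have "\<dots> = (\<Sum>k<L - (q-p). if k < p then f k else f (k + (q-p))) + (\<Sum>k<(q-p). f (p + k))"
    using sum_split_aux[OF pdL] by blast
  also have "(\<Sum>k<L - (q-p). if k < p then f k else f (k + (q-p))) = wweight A (wcut W p q)"
    unfolding wweight_def wl
  proof (rule sum.cong[OF refl])
    fix k assume "k \<in> {..<L - (q - p)}"
    then have k: "Suc k < length (wcut W p q)" using len unfolding L_def by auto
    show "(if k < p then f k else f (k + (q - p))) = A (wcut W p q ! k) (wcut W p q ! Suc k)"
    proof (cases "k < p")
      case True then show ?thesis using cut_nth1[OF pq(1,2)] unfolding f_def by auto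
    next
      case False then show ?thesis using cut_nth3[OF pq] k unfolding f_def by auto
    qed
  qed
  also have "(\<Sum>k<(q-p). f (p + k)) = wweight A (sub W p q)"
    unfolding wweight_def ws
    by (rule sum.cong[OF refl]) (use sub_nth[OF pq(1,2)] in \<open>auto simp: f_def\<close>)
  finally show ?thesis .
qed




lemma cycle_le0:
  assumes c: "is_cycle n A Z" and m: "mcm n A = 0"
  shows "wweight A Z \<le> 0"
proof -
  have "wweight A Z / ereal (real (wlen Z)) \<le> mcm n A"
    unfolding mcm_def by (rule SUP_upper) (use c in auto)
  then have le: "wweight A Z / ereal (real (wlen Z)) \<le> 0" using m by simp
  have "wlen Z > 0" using c unfolding is_cycle_def wlen_def by auto
  then have pos: "ereal (real (wlen Z)) > 0" "ereal (real (wlen Z)) \<noteq> \<infinity>" by auto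
  show ?thesis using le ereal_divide_le_pos[OF pos, where y=0 and z="wweight A Z"] by simp
qed

lemma closed_le0:
  assumes "is_walk n A C" "hd C = last C" "mcm n A = 0"
  shows "wweight A C \<le> 0"
  using assms
proof (induction "length C" arbitrary: C rule: less_induct)
  case less
  show ?case
  proof (cases "distinct (tl C)")
    case True
    show ?thesis
    proof (cases "length C \<ge> 2")
      case True
      then have "is_cycle n A C" using less.prems \<open>distinct (tl C)\<close> unfolding is_cycle_def by auto
      then show ?thesis using cycle_le0 less.prems by blast
    next
      case False
      then have "wlen C = 0" unfolding wlen_def by auto
      then show ?thesis unfolding wweight_def by simp
    qed
  next
    case False
    then obtain a b where ab: "a < b" "b < length (tl C)" "tl C ! a = tl C ! b"
      by (metis distinct_conv_nth linorder_neqE_nat)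
    define p where "p = Suc a"
    define q where "q = Suc b"
    have pq: "p \<le> q" "q < length C" "C ! p = C ! q" using ab unfolding p_def q_def
      by (auto simp: nth_tl)
    have w: "is_walk n A C" using less.prems by blast
    have e: "wweight A C = wweight A (wcut C p q) + wweight A (sub C p q)"
      using weight_cut[OF pq] .
    have l1: "length (wcut C p q) < length C" using length_cut[OF pq(1,2)] ab p_def q_def by auto
    have l2: "length (sub C p q) < length C" using length_sub[OF pq(1,2)] ab p_def q_def by auto
    have c1: "wweight A (wcut C p q) \<le> 0"
      apply (rule less.hyps[OF l1])
      using walk_cut[OF w pq] hd_cut[OF pq(1,2)] last_cut[OF pq] less.prems by auto
    have c2: "wweight A (sub C p q) \<le> 0"
      apply (rule less.hyps[OF l2])
      using walk_sub[OF w pq(1,2)] hd_sub[OF pq(1,2)] last_sub[OF pq(1,2)] pq less.prems by auto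
    show ?thesis using e c1 c2 by (metis add_mono add.right_neutral)
  qed
qed

definition okiv :: "nat list \<Rightarrow> (nat \<times> nat) list \<Rightarrow> bool" where
  "okiv W ivs \<longleftrightarrow> (\<forall>(p,q)\<in>set ivs. p \<le> q \<and> q < length W \<and> W ! p = W ! q) \<and>
      sorted_wrt (\<lambda>a b. snd a \<le> fst b) ivs"

definition ivlen :: "(nat \<times> nat) list \<Rightarrow> nat" where
  "ivlen ivs = sum_list (map (\<lambda>(p,q). q - p) ivs)"

definition survives :: "(nat \<times> nat) list \<Rightarrow> nat \<Rightarrow> bool" where
  "survives ivs k \<longleftrightarrow> (\<forall>(p,q)\<in>set ivs. \<not> (p < k \<and> k \<le> q))"

lemma multi_cut:
  assumes "is_walk n A W" "mcm n A = 0" "okiv W ivs"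
  shows "\<exists>V. is_walk n A V \<and> hd V = hd W \<and> last V = last W \<and>
     length V + ivlen ivs = length W \<and> wweight A W \<le> wweight A V \<and>
     (\<forall>k < length W. survives ivs k \<longrightarrow> W ! k \<in> set V)"
  using assms
proof (induction ivs arbitrary: W rule: rev_induct)
  case Nil
  then show ?case unfolding ivlen_def survives_def by auto
next
  case (snoc iv ivs)
  obtain p q where iv: "iv = (p, q)" by fastforce
  have pq: "p \<le> q" "q < length W" "W ! p = W ! q"
    using snoc.prems(3) iv unfolding okiv_def by auto
  have before: "\<forall>(p',q')\<in>set ivs. q' \<le> p"
    using snoc.prems(3) iv unfolding okiv_def by (auto simp: sorted_wrt_append)
  define W1 where "W1 = wcut W p q"
  have w1: "is_walk n A W1" using walk_cut[OF snoc.prems(1) pq] W1_def by simp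
  have len1: "length W1 + (q - p) = length W" using length_cut[OF pq(1,2)] W1_def by simp
  have ok1: "okiv W1 ivs"
  proof -
    have "\<forall>(p',q')\<in>set ivs. p' \<le> q' \<and> q' < length W1 \<and> W1 ! p' = W1 ! q'"
    proof (intro ballI, clarify)
      fix p' q' assume a: "(p', q') \<in> set ivs"
      then have "q' \<le> p" "p' \<le> q'" "W ! p' = W ! q'" using before snoc.prems(3) unfolding okiv_def by auto
      moreover have "p < length W1" using len1 pq by auto
      ultimately show "p' \<le> q' \<and> q' < length W1 \<and> W1 ! p' = W1 ! q'"
        using cut_nth1[OF pq(1,2)] W1_def by auto
    qed
    moreover have "sorted_wrt (\<lambda>a b. snd a \<le> fst b) ivs"
      using snoc.prems(3) unfolding okiv_def by (simp add: sorted_wrt_append)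
    ultimately show ?thesis unfolding okiv_def by blast
  qed
  obtain V where V: "is_walk n A V" "hd V = hd W1" "last V = last W1"
     "length V + ivlen ivs = length W1" "wweight A W1 \<le> wweight A V"
     "\<forall>k < length W1. survives ivs k \<longrightarrow> W1 ! k \<in> set V"
    using snoc.IH[OF w1 snoc.prems(2) ok1] by blast
  have wle: "wweight A W \<le> wweight A W1"
  proof -
    have "wweight A W = wweight A W1 + wweight A (sub W p q)" using weight_cut[OF pq] W1_def by simp
    moreover have "wweight A (sub W p q) \<le> 0"
      apply (rule closed_le0)
      using walk_sub[OF snoc.prems(1) pq(1,2)] hd_sub[OF pq(1,2)] last_sub[OF pq(1,2)] pq snoc.prems(2) by auto
    ultimately show ?thesis by (metis add_left_mono add.right_neutral)
  qed
  have surv: "W ! k \<in> set V" if k: "k < length W" "survives (ivs @ [iv]) k" for k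
  proof (cases "k \<le> p")
    case True
    then have "W1 ! k = W ! k" using cut_nth1[OF pq(1,2)] W1_def by simp
    moreover have "k < length W1" using True len1 pq by auto
    moreover have "survives ivs k" using k unfolding survives_def by auto
    ultimately show ?thesis using V(6) by metis
  next
    case False
    then have kq: "q < k" using k iv unfolding survives_def by auto
    define k' where "k' = k - (q - p)"
    have k'l: "k' < length W1" using len1 k kq k'_def by auto
    have k'p: "p < k'" using kq k'_def pq by auto
    have "W1 ! k' = W ! k" using cut_nth2[OF pq(1,2) k'p] k'l W1_def k'_def kq by simp
    moreover have "survives ivs k'" using before k'p unfolding survives_def by fastforce
    ultimately show ?thesis using V(6) k'l by metis
  qed
  show ?case
    apply (rule exI[of _ V])
    using V wle surv len1 iv hd_cut[OF pq(1,2)] last_cut[OF pq] W1_def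
    by (auto simp: ivlen_def)
qed




definition noremove :: "nat \<Rightarrow> nat set \<Rightarrow> nat list \<Rightarrow> bool" where
  "noremove g Zs W \<longleftrightarrow> (\<forall>ivs k. okiv W ivs \<and> g dvd ivlen ivs \<and> 0 < ivlen ivs \<and> k < length W \<and>
      W ! k \<in> Zs \<and> survives ivs k \<longrightarrow> False)"

lemma key:
  assumes t: "twice_optimal n A g Z0 W" and m: "mcm n A = 0"
  shows "noremove g (set Z0) W"
  unfolding noremove_def
proof (intro allI impI)
  fix ivs k assume a: "okiv W ivs \<and> g dvd ivlen ivs \<and> 0 < ivlen ivs \<and> k < length W \<and> W ! k \<in> set Z0 \<and> survives ivs k"
  have w: "is_walk n A W" using t unfolding twice_optimal_def by blast
  obtain V where V: "is_walk n A V" "hd V = hd W" "last V = last W"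
     "length V + ivlen ivs = length W" "wweight A W \<le> wweight A V"
     "\<forall>k < length W. survives ivs k \<longrightarrow> W ! k \<in> set V"
    using multi_cut[OF w m] a by blast
  have ne: "V \<noteq> []" using V(1) unfolding is_walk_def by blast
  have wl: "wlen W = wlen V + ivlen ivs" using V(4) ne unfolding wlen_def by (cases V) auto
  have thr: "through Z0 V" using V(6) a unfolding through_def by blast
  have md: "wlen V mod g = wlen W mod g" using wl a by (metis dvd_imp_mod_0 mod_add_right_eq add.right_neutral)
  have "wweight A V \<le> wweight A W \<and> (wweight A V = wweight A W \<longrightarrow> wlen W \<le> wlen V)"
    using t V(1,2,3) thr md unfolding twice_optimal_def by blast
  then have "wlen W \<le> wlen V" using V(5) by (meson antisym)
  then show False using wl a by auto
qed

lemma moddvd: "(a::nat) \<le> b \<Longrightarrow> (a mod g = b mod g) = (g dvd b - a)"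
  using mod_eq_dvd_iff_nat[where m=b and n=a and q=g] by auto

definition pos :: "nat list \<Rightarrow> nat \<Rightarrow> nat set" where
  "pos W x = {k. k < length W \<and> W ! k = x}"

lemma finite_pos[simp]: "finite (pos W x)" unfolding pos_def by auto

lemma noremoveD:
  assumes "noremove g Zs W" "okiv W ivs" "g dvd ivlen ivs" "0 < ivlen ivs" "k < length W"
    "W ! k \<in> Zs" "survives ivs k"
  shows False
  using assms unfolding noremove_def by blast

lemma C1:
  assumes nr: "noremove g Zs W"
    and ab: "a < b" "b < length W" "W ! a = W ! b" "a mod g = b mod g"
    and z: "z < length W" "W ! z \<in> Zs" "\<not> (a < z \<and> z \<le> b)"
  shows False
proof -
  have ok: "okiv W [(a,b)]" using ab unfolding okiv_def by auto
  have "g dvd ivlen [(a,b)]" using ab unfolding ivlen_def by (simp add: moddvd)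
  moreover have "0 < ivlen [(a,b)]" using ab unfolding ivlen_def by simp
  moreover have "survives [(a,b)] z" using z unfolding survives_def by auto
  ultimately show False using noremoveD[OF nr ok _ _ z(1,2)] by blast
qed

lemma C2:
  assumes nr: "noremove g Zs W"
    and ab: "a1 \<le> b1" "b1 \<le> a2" "a2 \<le> b2" "b2 < length W" "W ! a1 = W ! b1" "W ! a2 = W ! b2"
       "g dvd (b1 - a1) + (b2 - a2)" "0 < (b1 - a1) + (b2 - a2)"
    and z: "z < length W" "W ! z \<in> Zs" "\<not> (a1 < z \<and> z \<le> b1)" "\<not> (a2 < z \<and> z \<le> b2)"
  shows False
proof -
  have ok: "okiv W [(a1,b1),(a2,b2)]" using ab unfolding okiv_def by auto
  have "g dvd ivlen [(a1,b1),(a2,b2)]" using ab unfolding ivlen_def by simp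
  moreover have "0 < ivlen [(a1,b1),(a2,b2)]" using ab unfolding ivlen_def by simp
  moreover have "survives [(a1,b1),(a2,b2)] z" using z unfolding survives_def by auto
  ultimately show False using noremoveD[OF nr ok _ _ z(1,2)] by blast
qed

lemma C3:
  assumes nr: "noremove g Zs W"
    and ab: "a1 \<le> b1" "b1 \<le> a2" "a2 \<le> b2" "b2 \<le> a3" "a3 \<le> b3" "b3 < length W"
       "W ! a1 = W ! b1" "W ! a2 = W ! b2" "W ! a3 = W ! b3"
       "g dvd (b1 - a1) + (b2 - a2) + (b3 - a3)" "0 < (b1 - a1) + (b2 - a2) + (b3 - a3)"
    and z: "z < length W" "W ! z \<in> Zs" "\<not> (a1 < z \<and> z \<le> b1)" "\<not> (a2 < z \<and> z \<le> b2)"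
       "\<not> (a3 < z \<and> z \<le> b3)"
  shows False
proof -
  have ok: "okiv W [(a1,b1),(a2,b2),(a3,b3)]" using ab unfolding okiv_def by auto
  have "g dvd ivlen [(a1,b1),(a2,b2),(a3,b3)]" using ab unfolding ivlen_def by (simp add: add.assoc)
  moreover have "0 < ivlen [(a1,b1),(a2,b2),(a3,b3)]" using ab unfolding ivlen_def by simp
  moreover have "survives [(a1,b1),(a2,b2),(a3,b3)] z" using z unfolding survives_def by auto
  ultimately show False using noremoveD[OF nr ok _ _ z(1,2)] by blast
qed

lemma card_mod_le:
  fixes S :: "nat set"
  assumes g: "g > 0" and inj: "\<And>a b. a \<in> S \<Longrightarrow> b \<in> S \<Longrightarrow> a < b \<Longrightarrow> f a mod g = f b mod g \<Longrightarrow> False"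
  shows "card S \<le> g"
proof -
  have "inj_on (\<lambda>k. f k mod g) S"
  proof (rule inj_onI)
    fix a b assume "a \<in> S" "b \<in> S" "f a mod g = f b mod g"
    then show "a = b"
    proof (cases a b rule: linorder_cases)
      case less then show ?thesis using inj \<open>a \<in> S\<close> \<open>b \<in> S\<close> \<open>f a mod g = f b mod g\<close> by blast
    next
      case equal then show ?thesis .
    next
      case greater
      have "f b mod g = f a mod g" using \<open>f a mod g = f b mod g\<close> by simp
      then show ?thesis using inj[OF \<open>b \<in> S\<close> \<open>a \<in> S\<close> greater] by blast
    qed
  qed
  moreover have "(\<lambda>k. f k mod g) ` S \<subseteq> {..<g}" using g by auto
  ultimately have "card S \<le> card {..<g}" by (meson card_inj_on_le finite_lessThan)
  then show ?thesis by simp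
qed

lemma CZ:
  assumes nr: "noremove g Zs W" and g: "g > 0" and z: "z \<in> Zs"
  shows "card (pos W z) \<le> g"
proof (rule card_mod_le[OF g, where f="\<lambda>k. k"])
  fix a b assume ab: "a \<in> pos W z" "b \<in> pos W z" "a < b" "a mod g = b mod g"
  then have h: "b < length W" "W ! a = W ! b" "a < length W" "W ! a \<in> Zs" using z unfolding pos_def by auto
  have nz: "\<not> (a < a \<and> a \<le> b)" by simp
  show False by (rule C1[OF nr ab(3) h(1,2) ab(4) h(3,4) nz])
qed

lemma CO:
  assumes nr: "noremove g Zs W" and g: "g > 0" and x: "x \<notin> Zs"
    and z0: "z0 < length W" "W ! z0 \<in> Zs"
  shows "card (pos W x) \<le> Suc g"
proof -
  define S where "S = pos W x"
  define Bef where "Bef = {k \<in> S. k < z0}"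
  define Aft where "Aft = {k \<in> S. z0 < k}"
  have z0S: "z0 \<notin> S" using x z0 unfolding S_def pos_def by auto
  have SU: "S = Bef \<union> Aft"
  proof
    show "S \<subseteq> Bef \<union> Aft"
    proof
      fix k assume "k \<in> S"
      then have "k \<noteq> z0" using z0S by auto
      then show "k \<in> Bef \<union> Aft" using \<open>k \<in> S\<close> unfolding Bef_def Aft_def by (auto simp: linorder_neq_iff)
    qed
  qed (auto simp: Bef_def Aft_def)
  have fin: "finite Bef" "finite Aft" unfolding Bef_def Aft_def S_def by auto
  show ?thesis
  proof (cases "Bef = {} \<or> Aft = {}")
    case True
    have "card S \<le> g"
    proof (rule card_mod_le[OF g, where f="\<lambda>k. k"])
      fix a b assume ab: "a \<in> S" "b \<in> S" "a < b" "a mod g = b mod g"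
      have "a \<noteq> z0" "b \<noteq> z0" using ab z0S by auto
      have "\<not> (a < z0 \<and> z0 \<le> b)"
      proof (cases "Bef = {}")
        case True
        then have "a \<notin> Bef" by simp
        then show ?thesis using ab(1) unfolding Bef_def by auto
      next
        case False
        then have "Aft = {}" using \<open>Bef = {} \<or> Aft = {}\<close> by simp
        then have "b \<notin> Aft" by simp
        then have "\<not> z0 < b" using ab(2) unfolding Aft_def by auto
        then show ?thesis using \<open>b \<noteq> z0\<close> by simp
      qed
      moreover have "b < length W" "W ! a = W ! b" using ab unfolding S_def pos_def by auto
      ultimately show False using C1[OF nr ab(3) _ _ ab(4) z0] by blast
    qed
    then show ?thesis unfolding S_def by simp
  next
    case False
    define b where "b = Max Bef"
    define a where "a = Min Aft"
    have bB: "b \<in> Bef" using False fin b_def by auto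
    have aA: "a \<in> Aft" using False fin a_def by auto
    have bmax: "\<And>k. k \<in> Bef \<Longrightarrow> k \<le> b" using fin b_def by auto
    have amin: "\<And>k. k \<in> Aft \<Longrightarrow> a \<le> k" using fin a_def by auto
    have ba: "b < z0" "z0 < a" using aA bB unfolding Aft_def Bef_def by auto
    have aS: "a < length W" "W ! a = x" "b < length W" "W ! b = x"
      using aA bB unfolding Aft_def Bef_def S_def pos_def by auto
    define phi where "phi k = (if k < z0 then k else k - (a - b))" for k
    have "card (S - {a}) \<le> g"
    proof (rule card_mod_le[OF g, where f=phi])
      fix k1 k2 assume kk: "k1 \<in> S - {a}" "k2 \<in> S - {a}" "k1 < k2" "phi k1 mod g = phi k2 mod g"
      have kS: "k1 < length W" "W ! k1 = x" "k2 < length W" "W ! k2 = x"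
        using kk unfolding S_def pos_def by auto
      have k1z: "k1 \<noteq> z0" "k2 \<noteq> z0" using kk z0S by auto
      show False
      proof (cases "k2 < z0")
        case True
        have m: "k1 mod g = k2 mod g" using kk(4) True kk(3) unfolding phi_def by simp
        have eq: "W ! k1 = W ! k2" using kS by simp
        have nz: "\<not> (k1 < z0 \<and> z0 \<le> k2)" using True by simp
        show False by (rule C1[OF nr kk(3) kS(3) eq m z0(1,2) nz])
      next
        case F2: False
        have "z0 < k2" using F2 k1z by simp
        then have "k2 \<in> Aft" using kk unfolding Aft_def by simp
        then have "a \<le> k2" using amin by blast
        moreover have "k2 \<noteq> a" using kk by simp
        ultimately have k2a: "a < k2" by simp
        show False
        proof (cases "z0 < k1")
          case True
          have "k1 \<in> Aft" using True kk unfolding Aft_def by simp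
          then have "a \<le> k1" using amin by blast
          moreover have "k1 \<noteq> a" using kk by simp
          ultimately have k1a: "a < k1" by simp
          have "(k1 - (a - b)) mod g = (k2 - (a - b)) mod g" using kk True F2 unfolding phi_def by auto
          then have "g dvd (k2 - (a-b)) - (k1 - (a-b))" using kk(3) by (simp add: moddvd)
          moreover have "(k2 - (a-b)) - (k1 - (a-b)) = k2 - k1" using k1a ba by auto
          ultimately have m: "k1 mod g = k2 mod g" using kk(3) by (simp add: moddvd)
          have eq: "W ! k1 = W ! k2" using kS by simp
          have nz: "\<not> (k1 < z0 \<and> z0 \<le> k2)" using True by simp
          show False by (rule C1[OF nr kk(3) kS(3) eq m z0(1,2) nz])
        next
          case False
          then have k1z0: "k1 < z0" using k1z by auto
          then have "k1 \<in> Bef" using kk unfolding Bef_def by simp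
          then have k1b: "k1 \<le> b" using bmax by blast
          have "k1 mod g = (k2 - (a - b)) mod g" using kk k1z0 F2 unfolding phi_def by auto
          then have d: "g dvd (k2 - (a-b)) - k1" using k1b ba k2a by (simp add: moddvd)
          have e: "(k2 - (a-b)) - k1 = (b - k1) + (k2 - a)" using k1b ba k2a by auto
          have h1: "b \<le> a" "a \<le> k2" using ba k2a by auto
          have h2: "W ! k1 = W ! b" "W ! a = W ! k2" using kS aS by auto
          have h3a: "g dvd (b - k1) + (k2 - a)" using d by (simp only: e)
          have h3: "g dvd (b - k1) + (k2 - a)" "0 < (b - k1) + (k2 - a)" using h3a k2a by auto
          have h4: "\<not> (k1 < z0 \<and> z0 \<le> b)" "\<not> (a < z0 \<and> z0 \<le> k2)" using ba by auto
          show False by (rule C2[OF nr k1b h1 kS(3) h2 h3 z0(1,2) h4])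
        qed
      qed
    qed
    moreover have "card S = Suc (card (S - {a}))"
    proof -
      have "a \<in> S" using aA unfolding Aft_def by simp
      then have "a \<in> pos W x" unfolding S_def .
      from card.remove[OF finite_pos this] show ?thesis unfolding S_def .
    qed
    ultimately show ?thesis unfolding S_def by simp
  qed
qed




lemma D_before:
  assumes nr: "noremove g Zs W" and g: "g > 0" and i: "i \<in> Zs" and j: "j \<notin> Zs"
    and cj: "card (pos W j) = Suc g" and r: "r < length W" "W ! r = i"
  shows "\<exists>p<r. W ! p = j"
proof (rule ccontr)
  assume no: "\<not> (\<exists>p<r. W ! p = j)"
  have "card (pos W j) \<le> g"
  proof (rule card_mod_le[OF g, where f="\<lambda>k. k"])
    fix a b assume ab: "a \<in> pos W j" "b \<in> pos W j" "a < b" "a mod g = b mod g"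
    have h: "b < length W" "W ! a = W ! b" using ab unfolding pos_def by auto
    have "a \<noteq> r" using ab i j r unfolding pos_def by auto
    moreover have "\<not> a < r" using no ab unfolding pos_def by auto
    ultimately have nz: "\<not> (a < r \<and> r \<le> b)" by simp
    have ri: "W ! r \<in> Zs" using r i by simp
    show False by (rule C1[OF nr ab(3) h ab(4) r(1) ri nz])
  qed
  then show False using cj by simp
qed

lemma D_after:
  assumes nr: "noremove g Zs W" and g: "g > 0" and i: "i \<in> Zs" and j: "j \<notin> Zs"
    and cj: "card (pos W j) = Suc g" and r: "r < length W" "W ! r = i"
  shows "\<exists>q. r < q \<and> q < length W \<and> W ! q = j"
proof (rule ccontr)
  assume no: "\<not> (\<exists>q. r < q \<and> q < length W \<and> W ! q = j)"
  have "card (pos W j) \<le> g"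
  proof (rule card_mod_le[OF g, where f="\<lambda>k. k"])
    fix a b assume ab: "a \<in> pos W j" "b \<in> pos W j" "a < b" "a mod g = b mod g"
    have h: "b < length W" "W ! a = W ! b" using ab unfolding pos_def by auto
    have "b \<noteq> r" using ab i j r unfolding pos_def by auto
    moreover have "\<not> r < b" using no ab unfolding pos_def by auto
    ultimately have nz: "\<not> (a < r \<and> r \<le> b)" by simp
    have ri: "W ! r \<in> Zs" using r i by simp
    show False by (rule C1[OF nr ab(3) h ab(4) r(1) ri nz])
  qed
  then show False using cj by simp
qed

lemma E_gap:
  assumes nr: "noremove g Zs W" and g: "g > 0" and i: "i \<in> Zs" and j: "j \<notin> Zs"
    and cj: "card (pos W j) = Suc g"
    and rr: "r < r'" "r' < length W" "W ! r = i" "W ! r' = i"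
    and nj: "\<forall>p. r < p \<and> p < r' \<longrightarrow> W ! p \<noteq> j"
  shows False
proof -
  define P where "P = pos W j"
  define PL where "PL = {p \<in> P. p < r}"
  define PR where "PR = {p \<in> P. r' < p}"
  have finP: "finite PL" "finite PR" unfolding PL_def PR_def P_def by auto
  obtain p0 where "p0 < r" "W ! p0 = j" using D_before[OF nr g i j cj _ rr(3)] rr by auto
  then have "p0 \<in> PL" unfolding PL_def P_def pos_def using rr by auto
  then have PLne: "PL \<noteq> {}" by auto
  obtain q0 where "r' < q0" "q0 < length W" "W ! q0 = j" using D_after[OF nr g i j cj rr(2) rr(4)] by auto
  then have "q0 \<in> PR" unfolding PR_def P_def pos_def by auto
  then have PRne: "PR \<noteq> {}" by auto
  define pl where "pl = Max PL"
  define pr where "pr = Min PR"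
  have plP: "pl \<in> PL" using finP PLne pl_def by auto
  have prP: "pr \<in> PR" using finP PRne pr_def by auto
  have plmax: "\<And>k. k \<in> PL \<Longrightarrow> k \<le> pl" using finP pl_def by auto
  have prmin: "\<And>k. k \<in> PR \<Longrightarrow> pr \<le> k" using finP pr_def by auto
  have pl: "pl < r" "pl < length W" "W ! pl = j" using plP unfolding PL_def P_def pos_def by auto
  have pr: "r' < pr" "pr < length W" "W ! pr = j" using prP unfolding PR_def P_def pos_def by auto
  have ij: "i \<noteq> j" using i j by auto
  have split: "k < r \<or> r' < k" if "k \<in> P" for k
  proof -
    have "W ! k = j" "k < length W" using that unfolding P_def pos_def by auto
    then have "k \<noteq> r" "k \<noteq> r'" using rr ij by auto
    moreover have "\<not> (r < k \<and> k < r')" using nj \<open>W ! k = j\<close> by auto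
    ultimately show ?thesis by auto
  qed
  define psi where "psi k = (if k < r then k else k - (pr - pl) + (r' - r))" for k
  have "card P \<le> g"
  proof (rule card_mod_le[OF g, where f=psi])
    fix k1 k2 assume kk: "k1 \<in> P" "k2 \<in> P" "k1 < k2" "psi k1 mod g = psi k2 mod g"
    have kS: "k1 < length W" "W ! k1 = j" "k2 < length W" "W ! k2 = j"
      using kk unfolding P_def pos_def by auto
    have ri: "W ! r \<in> Zs" using rr i by simp
    show False
    proof (cases "k2 < r")
      case True
      have m: "k1 mod g = k2 mod g" using kk(4) True kk(3) unfolding psi_def by simp
      have eq: "W ! k1 = W ! k2" using kS by simp
      have nz: "\<not> (k1 < r \<and> r \<le> k2)" using True by simp
      show False by (rule C1[OF nr kk(3) kS(3) eq m rr(1)[THEN less_trans, OF rr(2)] ri nz])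
    next
      case F2: False
      then have k2r: "r' < k2" using split[OF kk(2)] by auto
      then have "k2 \<in> PR" using kk unfolding PR_def by simp
      then have k2p: "pr \<le> k2" using prmin by blast
      show False
      proof (cases "k1 < r")
        case False
        then have k1r: "r' < k1" using split[OF kk(1)] by auto
        then have "k1 \<in> PR" using kk unfolding PR_def by simp
        then have k1p: "pr \<le> k1" using prmin by blast
        have "(k1 - (pr - pl) + (r' - r)) mod g = (k2 - (pr - pl) + (r' - r)) mod g"
          using kk(4) False F2 unfolding psi_def by simp
        then have "g dvd (k2 - (pr - pl) + (r' - r)) - (k1 - (pr - pl) + (r' - r))"
          using kk(3) k1p by (simp add: moddvd)
        moreover have "(k2 - (pr - pl) + (r' - r)) - (k1 - (pr - pl) + (r' - r)) = k2 - k1"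
          using k1p kk(3) pl pr by auto
        ultimately have m: "k1 mod g = k2 mod g" using kk(3) by (simp add: moddvd)
        have eq: "W ! k1 = W ! k2" using kS by simp
        have nz: "\<not> (k1 < r \<and> r \<le> k2)" using k1r rr by simp
        show False by (rule C1[OF nr kk(3) kS(3) eq m rr(1)[THEN less_trans, OF rr(2)] ri nz])
      next
        case True
        then have "k1 \<in> PL" using kk unfolding PL_def by simp
        then have k1p: "k1 \<le> pl" using plmax by blast
        have "k1 mod g = (k2 - (pr - pl) + (r' - r)) mod g"
          using kk(4) True F2 unfolding psi_def by simp
        then have d: "g dvd (k2 - (pr - pl) + (r' - r)) - k1"
          using k1p k2p pl pr rr by (simp add: moddvd)
        have e: "(k2 - (pr - pl) + (r' - r)) - k1 = (pl - k1) + (r' - r) + (k2 - pr)"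
          using k1p k2p pl pr rr by auto
        have h3a: "g dvd (pl - k1) + (r' - r) + (k2 - pr)" using d by (simp only: e)
        have h0: "0 < (pl - k1) + (r' - r) + (k2 - pr)" using rr by simp
        have o: "pl \<le> r" "r \<le> r'" "r' \<le> pr" "pr \<le> k2" using pl pr rr k2p by auto
        have w: "W ! k1 = W ! pl" "W ! r = W ! r'" "W ! pr = W ! k2" using kS pl pr rr by auto
        have nz: "\<not> (k1 < r \<and> r \<le> pl)" "\<not> (r < r \<and> r \<le> r')" "\<not> (pr < r \<and> r \<le> k2)"
          using pl pr rr by auto
        show False
          by (rule C3[OF nr k1p o kS(3) w h3a h0 rr(1)[THEN less_trans, OF rr(2)] ri nz])
      qed
    qed
  qed
  then show False using cj P_def by simp
qed




lemma E_final:
  assumes nr: "noremove g Zs W" and g: "g > 0" and i: "i \<in> Zs" and j: "j \<notin> Zs"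
    and cj: "card (pos W j) = Suc g" and ci: "card (pos W i) = g"
  shows "\<forall>p q. p < q \<and> q < length W \<and> W ! p = j \<and> W ! q = j \<and>
              (\<forall>r. p < r \<and> r < q \<longrightarrow> W ! r \<noteq> j) \<longrightarrow>
              (\<exists>!r. p < r \<and> r < q \<and> W ! r = i)"
proof (intro allI impI)
  fix p q assume pq: "p < q \<and> q < length W \<and> W ! p = j \<and> W ! q = j \<and> (\<forall>r. p < r \<and> r < q \<longrightarrow> W ! r \<noteq> j)"
  have ij: "i \<noteq> j" using i j by auto
  define P where "P = pos W j"
  define Q where "Q = pos W i"
  have finP: "finite P" "finite Q" unfolding P_def Q_def by auto
  have Pne: "P \<noteq> {}" using cj unfolding P_def by auto
  define M where "M = Max P"
  have Mmax: "\<And>k. k \<in> P \<Longrightarrow> k \<le> M" using finP M_def by auto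
  define f where "f r = Max {p \<in> P. p < r}" for r
  have fprop: "f r \<in> P \<and> f r < r \<and> (\<forall>p'\<in>P. p' < r \<longrightarrow> p' \<le> f r)" if r: "r \<in> Q" for r
  proof -
    have rr: "r < length W" "W ! r = i" using r unfolding Q_def pos_def by auto
    obtain p0 where "p0 < r" "W ! p0 = j" using D_before[OF nr g i j cj rr] by auto
    then have "p0 \<in> {p \<in> P. p < r}" using rr unfolding P_def pos_def by auto
    then have ne: "{p \<in> P. p < r} \<noteq> {}" by auto
    have fin: "finite {p \<in> P. p < r}" using finP by auto
    have "f r \<in> {p \<in> P. p < r}" using Max_in[OF fin ne] f_def by simp
    moreover have "\<forall>p'\<in>P. p' < r \<longrightarrow> p' \<le> f r" using Max_ge[OF fin] f_def by auto
    ultimately show ?thesis by auto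
  qed
  have fnM: "f r \<noteq> M" if r: "r \<in> Q" for r
  proof -
    have rr: "r < length W" "W ! r = i" using r unfolding Q_def pos_def by auto
    obtain q0 where "r < q0" "q0 < length W" "W ! q0 = j" using D_after[OF nr g i j cj rr] by auto
    then have "q0 \<in> P" unfolding P_def pos_def by auto
    then have "q0 \<le> M" using Mmax by blast
    then show ?thesis using fprop[OF r] \<open>r < q0\<close> by auto
  qed
  have noinj: False if r12: "r1 \<in> Q" "r2 \<in> Q" "r1 < r2" "f r1 = f r2" for r1 r2
  proof -
    have rr: "r1 < length W" "W ! r1 = i" "r2 < length W" "W ! r2 = i" using r12 unfolding Q_def pos_def by auto
    have nj: "\<forall>p. r1 < p \<and> p < r2 \<longrightarrow> W ! p \<noteq> j"
    proof (intro allI impI notI)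
      fix p' assume a: "r1 < p' \<and> p' < r2" "W ! p' = j"
      then have "p' \<in> P" using rr unfolding P_def pos_def by auto
      then have "p' \<le> f r2" using fprop[OF r12(2)] a by auto
      then show False using fprop[OF r12(1)] r12(4) a by auto
    qed
    show False by (rule E_gap[OF nr g i j cj r12(3) rr(3) rr(2) rr(4) nj])
  qed
  have inj: "inj_on f Q"
  proof (rule inj_onI)
    fix a b assume ab: "a \<in> Q" "b \<in> Q" "f a = f b"
    show "a = b"
    proof (cases a b rule: linorder_cases)
      case less then show ?thesis using noinj ab by blast
    next
      case equal then show ?thesis .
    next
      case greater then show ?thesis using noinj[OF ab(2) ab(1) greater] ab(3) by simp
    qed
  qed
  have sub: "f ` Q \<subseteq> P - {M}" using fprop fnM by auto
  have cP: "card (P - {M}) = g"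
  proof -
    have "M \<in> P" using finP Pne M_def by auto
    then show ?thesis using cj finP unfolding P_def by (simp add: card_Diff_singleton)
  qed
  have img: "f ` Q = P - {M}"
  proof (rule card_subset_eq)
    show "finite (P - {M})" using finP by auto
    show "f ` Q \<subseteq> P - {M}" using sub .
    show "card (f ` Q) = card (P - {M})" using card_image[OF inj] ci cP unfolding Q_def by simp
  qed
  have pP: "p \<in> P" "q \<in> P" using pq unfolding P_def pos_def by auto
  have "p \<noteq> M" using Mmax[OF pP(2)] pq by auto
  then have "p \<in> f ` Q" using img pP by auto
  then obtain r where r: "r \<in> Q" "f r = p" by auto
  have rr: "r < length W" "W ! r = i" using r unfolding Q_def pos_def by auto
  have pr: "p < r" using fprop[OF r(1)] r by auto
  have rq: "r < q"
  proof (rule ccontr)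
    assume "\<not> r < q"
    moreover have "r \<noteq> q" using rr pq ij by auto
    ultimately have "q < r" by simp
    then have "q \<le> f r" using fprop[OF r(1)] pP by auto
    then show False using r pq by auto
  qed
  show "\<exists>!r. p < r \<and> r < q \<and> W ! r = i"
  proof (rule ex1I[of _ r])
    show "p < r \<and> r < q \<and> W ! r = i" using pr rq rr by simp
  next
    fix r' assume r': "p < r' \<and> r' < q \<and> W ! r' = i"
    show "r' = r"
    proof (rule ccontr)
      assume ne: "r' \<noteq> r"
      define a where "a = min r r'"
      define b where "b = max r r'"
      have ab: "a < b" "b < length W" "W ! a = i" "W ! b = i" using ne r' rr pq pr rq
        unfolding a_def b_def by (auto simp: min_def max_def)
      have nj: "\<forall>p'. a < p' \<and> p' < b \<longrightarrow> W ! p' \<noteq> j"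
        using pq r' pr rq unfolding a_def b_def by (auto simp: min_def max_def)
      show False by (rule E_gap[OF nr g i j cj ab nj])
    qed
  qed
qed




lemma card_sum_pos:
  assumes "\<forall>k\<in>set W. k < n"
  shows "length W = (\<Sum>x<n. card (pos W x))"
proof -
  have U: "{..<length W} = (\<Union>x\<in>{..<n}. pos W x)"
    using assms unfolding pos_def by (auto dest: nth_mem)
  have "card (\<Union>x\<in>{..<n}. pos W x) = (\<Sum>x<n. card (pos W x))"
    by (rule card_UN_disjoint) (auto simp: pos_def)
  then show ?thesis using U by (metis card_lessThan)
qed

theorem corollaryc:
  fixes n :: nat and A :: mpmat and Z0 W :: "nat list" and i j :: nat
  assumes finite_entries: "\<forall>a b. A a b \<noteq> \<infinity>"
    and lambda0: "mcm n A = 0"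
    and T1_DM: "T1 n A = DM (crit_girth n A) n"
    and Z0_cycle: "crit_cycle n A Z0" and Z0_len: "wlen Z0 = crit_girth n A"
    and Z0_unique: "\<forall>Z. crit_cycle n A Z \<and> wlen Z = crit_girth n A \<longrightarrow>
                       (\<exists>k. tl Z = rotate k (tl Z0))"
    and i_in: "i \<in> set Z0" and j_node: "j < n" and j_notin: "j \<notin> set Z0"
    and W_int: "interesting n A (crit_girth n A) Z0 W"
  shows "(\<forall>p q. p < q \<and> q < length W \<and> W ! p = j \<and> W ! q = j \<and>
              (\<forall>r. p < r \<and> r < q \<longrightarrow> W ! r \<noteq> j) \<longrightarrow>
              (\<exists>!r. p < r \<and> r < q \<and> W ! r = i))
       \<and> (j \<in> set W \<longrightarrow>
            (\<forall>r < length W. W ! r = i \<longrightarrow>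
               (\<exists>p < r. W ! p = j) \<and> (\<exists>q. r < q \<and> q < length W \<and> W ! q = j)))"
proof -
  define g where "g = crit_girth n A"
  define Zs where "Zs = set Z0"
  have cyc: "is_cycle n A Z0" using Z0_cycle unfolding crit_cycle_def by blast
  have len2: "length Z0 \<ge> 2" and hdl: "hd Z0 = last Z0" and dtl: "distinct (tl Z0)"
    and Zn: "\<forall>k\<in>set Z0. k < n"
    using cyc unfolding is_cycle_def is_walk_def by auto
  have gdef: "g = length Z0 - 1" using Z0_len unfolding g_def wlen_def by simp
  have g0: "g > 0" using gdef len2 by simp
  have setZ: "set Z0 = set (tl Z0)"
  proof (cases Z0)
    case Nil then show ?thesis using len2 by simp
  next
    case (Cons x xs)
    then have "xs \<noteq> []" using len2 by auto
    then have "last Z0 \<in> set xs" using Cons by simp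
    then have "x \<in> set xs" using hdl Cons by simp
    then show ?thesis using Cons by auto
  qed
  have cardZ: "card Zs = g" using setZ dtl gdef unfolding Zs_def by (simp add: distinct_card)
  have Zsn: "Zs \<subseteq> {..<n}" using Zn unfolding Zs_def by auto
  have "insert j Zs \<subseteq> {..<n}" using Zsn j_node by auto
  then have "card (insert j Zs) \<le> n" by (metis card_lessThan card_mono finite_lessThan)
  moreover have "card (insert j Zs) = Suc g" using cardZ j_notin Zsn unfolding Zs_def
    by (simp add: finite_subset)
  ultimately have ng: "Suc g \<le> n" by simp
  have tw: "twice_optimal n A g Z0 W" and wl: "wlen W = DM g n + g - 1"
    using W_int unfolding interesting_def g_def by auto
  have walk: "is_walk n A W" using tw unfolding twice_optimal_def by blast
  have Wne: "W \<noteq> []" and Wn: "\<forall>k\<in>set W. k < n" using walk unfolding is_walk_def by auto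
  have nr: "noremove g Zs W" using key[OF tw lambda0] unfolding Zs_def .
  have "set W \<inter> set Z0 \<noteq> {}" using tw unfolding twice_optimal_def through_def by blast
  then obtain x0 where "x0 \<in> set W" "x0 \<in> set Z0" by blast
  then obtain z0 where z0: "z0 < length W" "W ! z0 \<in> Zs"
    unfolding Zs_def by (metis in_set_conv_nth)
  have i: "i \<in> Zs" and j: "j \<notin> Zs" using i_in j_notin unfolding Zs_def by auto
  define bnd where "bnd x = (if x \<in> Zs then g else Suc g)" for x
  have le: "\<forall>x\<in>{..<n}. card (pos W x) \<le> bnd x"
    using CZ[OF nr g0] CO[OF nr g0 _ z0] unfolding bnd_def by auto
  obtain m where m: "n = Suc g + m" using ng le_Suc_ex by blast
  obtain g' where g': "g = Suc g'" using g0 gr0_implies_Suc by blast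
  have lenW: "length W = g * (n - 2) + n + g"
  proof -
    have "length W = wlen W + 1" using Wne unfolding wlen_def by (cases W) auto
    then show ?thesis using wl unfolding DM_def using m g' by simp
  qed
  have sb: "(\<Sum>x<n. bnd x) = g * g + (n - g) * Suc g"
  proof -
    have "(\<Sum>x<n. bnd x) = (\<Sum>x\<in>{..<n} - Zs. bnd x) + (\<Sum>x\<in>Zs. bnd x)"
      using Zsn by (simp add: sum.subset_diff)
    moreover have "(\<Sum>x\<in>Zs. bnd x) = (\<Sum>x\<in>Zs. g)" by (rule sum.cong) (auto simp: bnd_def)
    moreover have "(\<Sum>x\<in>{..<n} - Zs. bnd x) = (\<Sum>x\<in>{..<n} - Zs. Suc g)" by (rule sum.cong) (auto simp: bnd_def)
    moreover have "card ({..<n} - Zs) = n - g" using Zsn cardZ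
      by (simp add: card_Diff_subset finite_subset)
    ultimately show ?thesis using cardZ by (simp add: mult.commute)
  qed
  have eqsum: "(\<Sum>x<n. card (pos W x)) = (\<Sum>x<n. bnd x)"
  proof -
    have "(\<Sum>x<n. card (pos W x)) = length W" using card_sum_pos[OF Wn] by simp
    also have "\<dots> = (\<Sum>x<n. bnd x)" using lenW sb m g' by (simp add: algebra_simps)
    finally show ?thesis .
  qed
  have exact: "card (pos W x) = bnd x" if x: "x < n" for x
  proof (rule ccontr)
    assume "card (pos W x) \<noteq> bnd x"
    then have "card (pos W x) < bnd x" using le x by (meson le_neq_implies_less lessThan_iff)
    then have "(\<Sum>x<n. card (pos W x)) < (\<Sum>x<n. bnd x)"
      using le x by (intro sum_strict_mono_ex1) auto
    then show False using eqsum by simp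
  qed
  have iN: "i < n" using i Zsn by auto
  have cj: "card (pos W j) = Suc g" using exact[OF j_node] j unfolding bnd_def by simp
  have ci: "card (pos W i) = g" using exact[OF iN] i unfolding bnd_def by simp
  have part1: "\<forall>p q. p < q \<and> q < length W \<and> W ! p = j \<and> W ! q = j \<and>
              (\<forall>r. p < r \<and> r < q \<longrightarrow> W ! r \<noteq> j) \<longrightarrow>
              (\<exists>!r. p < r \<and> r < q \<and> W ! r = i)"
    by (rule E_final[OF nr g0 i j cj ci])
  have part2: "\<forall>r < length W. W ! r = i \<longrightarrow>
               (\<exists>p < r. W ! p = j) \<and> (\<exists>q. r < q \<and> q < length W \<and> W ! q = j)"
    using D_before[OF nr g0 i j cj] D_after[OF nr g0 i j cj] by blast
  show ?thesis using part1 part2 by blast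
qed


end
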